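(* Over undirected graphs, $\varphi_{\mathit{GadLin}}(x)$ is expressible by an ACR-GNN.
   Context: Undirected graphs are directed graphs $G=(V,E,\lambda)$ (finite $V$, loop-free $E$, $\lambda:V\to\{0,1\}^d$) with symmetric edge relation; $\{v,w\}$ denotes the pair of edges $(v,w),(w,v)$, and $N_G(v)$ is the neighbourhood of $v$. An ACR-GNN layer for undirected graphs is a triple $(\mathsf{agg},\mathsf{comb},\mathsf{read})$ where $\mathsf{agg}$ and $\mathsf{read}$ map multisets of vectors to vectors; it maps $\lambda$ to $\lambda'(v)=\mathsf{comb}\big(\lambda(v), \mathsf{agg}(\{\!\{\lambda(w)\}\!\}_{w\in N_G(v)}), \mathsf{read}(\{\!\{\lambda(w)\}\!\}_{w\in V})\big)$, where $\{\!\{\cdot\}\!\}$ denotes a multiset. An ACR-GNN classifier is a fixed number of layers followed by a classification function to truth values. The gadgetisation $\mathsf{gad}(G)$ of a directed graph $G=(V,E,\lambda)$ is the undirected graph of dimension 3 such that for each edge $(u,w)\in E$ it has nodes $v^1_u, v^2_{(u,w)}, v^3_{(u,w)}, v^1_w$, edges $\{v^1_u,v^2_{(u,w)}\}$, $\{v^2_{(u,w)},v^3_{(u,w)}\}$, $\{v^3_{(u,w)},v^1_w\}$, and labels $(1,0,0)$ for $v^1_u,v^1_w$, $(0,1,0)$ for $v^2_{(u,w)}$, $(0,0,1)$ for $v^3_{(u,w)}$. $\varphi_{\mathit{GadLin}}(x)$ is the node classifier accepting a node of a graph $G$ iff $G$ is isomorphic to $\mathsf{gad}(G')$ for some strict linear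 order $G'$. *)

theory Defs
  imports Complex_Main "HOL-Library.Multiset"
begin

text \<open>A (labelled) graph: a vertex set, an edge relation and a labelling
  assigning to each vertex a vector in {0,1}^d, represented as a boolean list.\<close>
record 'v graph =
  verts :: "'v set"
  edges :: "('v \<times> 'v) set"
  lab   :: "'v \<Rightarrow> bool list"

definition dgraph :: "nat \<Rightarrow> 'v graph \<Rightarrow> bool" where
  "dgraph d G \<longleftrightarrow> finite (verts G) \<and> edges G \<subseteq> verts G \<times> verts G
     \<and> (\<forall>v. (v, v) \<notin> edges G) \<and> (\<forall>v\<in>verts G. length (lab G v) = d)"

definition ugraph :: "nat \<Rightarrow> 'v graph \<Rightarrow> bool" where
  "ugraph d G \<longleftrightarrow> dgraph d G \<and> (\<forall>v w. (v, w) \<in> edges G \<longrightarrow> (w, v) \<in> edges G)"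

definition nbrs :: "'v graph \<Rightarrow> 'v \<Rightarrow> 'v set" where
  "nbrs G v = {w. (v, w) \<in> edges G}"

definition graph_iso :: "'v graph \<Rightarrow> 'w graph \<Rightarrow> bool" where
  "graph_iso G H \<longleftrightarrow> (\<exists>f. bij_betw f (verts G) (verts H)
     \<and> (\<forall>u\<in>verts G. \<forall>w\<in>verts G. (u, w) \<in> edges G \<longleftrightarrow> (f u, f w) \<in> edges H)
     \<and> (\<forall>v\<in>verts G. lab H (f v) = lab G v))"

definition strict_linear_order :: "'v graph \<Rightarrow> bool" where
  "strict_linear_order G \<longleftrightarrow> (\<exists>d. dgraph d G)
     \<and> (\<forall>u w x. (u, w) \<in> edges G \<longrightarrow> (w, x) \<in> edges G \<longrightarrow> (u, x) \<in> edges G)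
     \<and> (\<forall>u\<in>verts G. \<forall>w\<in>verts G. u \<noteq> w \<longrightarrow> (u, w) \<in> edges G \<or> (w, u) \<in> edges G)"

datatype 'v gnode = V1 'v | V2 'v 'v | V3 'v 'v

fun gad_lab :: "'v gnode \<Rightarrow> bool list" where
  "gad_lab (V1 _) = [True, False, False]"
| "gad_lab (V2 _ _) = [False, True, False]"
| "gad_lab (V3 _ _) = [False, False, True]"

definition gad :: "'v graph \<Rightarrow> 'v gnode graph" where
  "gad G = \<lparr> verts = (\<Union>(u, w)\<in>edges G. {V1 u, V2 u w, V3 u w, V1 w}),
             edges = (\<Union>(u, w)\<in>edges G.
                {(V1 u, V2 u w), (V2 u w, V1 u), (V2 u w, V3 u w), (V3 u w, V2 u w),
                 (V3 u w, V1 w), (V1 w, V3 u w)}),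
             lab = gad_lab \<rparr>"

text \<open>Vectors of reals are represented as lists (length = dimension);
  aggregation and readout are arbitrary functions on multisets of vectors.\<close>
record acr_layer =
  agg  :: "real list multiset \<Rightarrow> real list"
  comb :: "real list \<Rightarrow> real list \<Rightarrow> real list \<Rightarrow> real list"
  rd   :: "real list multiset \<Rightarrow> real list"

definition apply_layer :: "acr_layer \<Rightarrow> 'v graph \<Rightarrow> ('v \<Rightarrow> real list) \<Rightarrow> ('v \<Rightarrow> real list)" where
  "apply_layer L G x = (\<lambda>v. comb L (x v)
       (agg L (image_mset x (mset_set (nbrs G v))))
       (rd L (image_mset x (mset_set (verts G)))))"

record acr_classifier =
  layers :: "acr_layer list"
  dims   :: "nat list"
  cls    :: "real list \<Rightarrow> bool"

definition wf_classifier :: "nat \<Rightarrow> acr_classifier \<Rightarrow> bool" where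
  "wf_classifier d C \<longleftrightarrow> length (dims C) = Suc (length (layers C)) \<and> dims C ! 0 = d
     \<and> (\<forall>i < length (layers C). \<forall>x y z. length x = dims C ! i \<longrightarrow>
           length (comb (layers C ! i) x y z) = dims C ! Suc i)"

definition init_features :: "'v graph \<Rightarrow> 'v \<Rightarrow> real list" where
  "init_features G = (\<lambda>v. map (\<lambda>b. if b then 1 else 0) (lab G v))"

definition run_layers :: "acr_layer list \<Rightarrow> 'v graph \<Rightarrow> ('v \<Rightarrow> real list) \<Rightarrow> ('v \<Rightarrow> real list)" where
  "run_layers Ls G x = foldl (\<lambda>y L. apply_layer L G y) x Ls"

definition accepts :: "acr_classifier \<Rightarrow> 'v graph \<Rightarrow> 'v \<Rightarrow> bool" where
  "accepts C G v \<longleftrightarrow> cls C (run_layers (layers C) G (init_features G) v)"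

definition phi_GadLin :: "'v graph \<Rightarrow> 'v \<Rightarrow> bool" where
  "phi_GadLin G v \<longleftrightarrow> (\<exists>G' :: nat graph. strict_linear_order G' \<and> graph_iso G (gad G'))"

end

theory Submission
  imports Defs "HOL-Library.Countable"
begin

definition mcode :: "nat multiset \<Rightarrow> nat" where
  "mcode M = to_nat (sorted_list_of_multiset M)"

lemma mcode_eq[simp]: "mcode M = mcode N \<longleftrightarrow> M = N"
  unfolding mcode_def by (metis mset_sorted_list_of_multiset to_nat_split)

definition kap :: "real list \<Rightarrow> nat" where
  "kap x = (if length x = 1 then nat \<lfloor>hd x\<rfloor> else to_nat (map (\<lambda>r. r = 1) x))"

lemma kap_real[simp]: "kap [real n] = n"
  by (simp add: kap_def)

primrec col :: "nat \<Rightarrow> 'v graph \<Rightarrow> 'v \<Rightarrow> nat" where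
  "col 0 G v = kap (init_features G v)"
| "col (Suc k) G v = to_nat (col k G v, mcode (image_mset (col k G) (mset_set (nbrs G v))))"

lemma col_Suc_eq:
  "col (Suc k) G x = col (Suc k) H y \<longleftrightarrow> col k G x = col k H y \<and>
     image_mset (col k G) (mset_set (nbrs G x)) = image_mset (col k H) (mset_set (nbrs H y))"
  by simp

lemma col_down: "col (j + k) G x = col (j + k) H y \<Longrightarrow> col k G x = col k H y"
  by (induction j) auto

lemma col0_lab: assumes "length (lab G x) = 3" shows "col 0 G x = to_nat (lab G x)"
proof -
  have "map (\<lambda>r. r = 1) (map (\<lambda>b. if b then (1::real) else 0) (lab G x)) = lab G x"
    by (induction "lab G x" rule: list.induct) (auto simp: comp_def cong: map_cong)
  then show ?thesis
    unfolding kap_def init_features_def col.simps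
    by (metis (no_types, lifting) ext \<open>length (lab G x) = 3\<close> length_map numeral_eq_one_iff semiring_norm(86))
qed

definition Lstep :: acr_layer where
  "Lstep = \<lparr>agg = \<lambda>M. [real (mcode (image_mset kap M))],
            comb = \<lambda>x y z. [real (to_nat (kap x, kap y))], rd = \<lambda>M. []\<rparr>"

lemma step_layer:
  assumes "\<forall>v. kap (x v) = col k G v"
  shows "\<forall>v. kap (apply_layer Lstep G x v) = col (Suc k) G v"
proof
  fix v
  have "image_mset kap (image_mset x (mset_set (nbrs G v))) = image_mset (col k G) (mset_set (nbrs G v))"
    using assms by (simp add: multiset.map_comp comp_def)
  then show "kap (apply_layer Lstep G x v) = col (Suc k) G v"
    using assms by (simp add: apply_layer_def Lstep_def)
qed

lemma run_rep:
  "\<forall>v. kap (x v) = col j G v \<Longrightarrow>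
   \<forall>v. kap (foldl (\<lambda>y L. apply_layer L G y) x (replicate k Lstep) v) = col (j + k) G v"
proof (induction k arbitrary: x j)
  case 0 then show ?case by simp
next
  case (Suc k)
  have "\<forall>v. kap (apply_layer Lstep G x v) = col (Suc j) G v" using step_layer Suc.prems by blast
  from Suc.IH[OF this] show ?case by simp
qed

definition Pgood :: "nat multiset \<Rightarrow> bool" where
  "Pgood N \<longleftrightarrow> (\<exists>G' :: nat graph. strict_linear_order G' \<and>
      N = image_mset (col 4 (gad G')) (mset_set (verts (gad G'))))"

definition Lfin :: acr_layer where
  "Lfin = \<lparr>agg = \<lambda>M. [], comb = \<lambda>x y z. [hd z],
           rd = \<lambda>M. [if Pgood (image_mset kap M) then 1 else 0]\<rparr>"

definition theC :: acr_classifier where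
  "theC = \<lparr>layers = replicate 4 Lstep @ [Lfin], dims = [3,1,1,1,1,1], cls = \<lambda>x. x = [1]\<rparr>"

lemma wf_theC: "wf_classifier 3 theC"
  unfolding wf_classifier_def theC_def
proof (intro conjI allI impI)
  fix i :: nat and x y z :: "real list"
  assume "i < length (layers \<lparr>layers = replicate 4 Lstep @ [Lfin], dims = [3, 1, 1, 1, 1, 1], cls = \<lambda>x. x = [1]\<rparr>)"
  then have "i = 0 \<or> i = 1 \<or> i = 2 \<or> i = 3 \<or> i = 4" by auto
  then show "length (comb (layers \<lparr>layers = replicate 4 Lstep @ [Lfin], dims = [3, 1, 1, 1, 1, 1], cls = \<lambda>x. x = [1]\<rparr> ! i) x y z) =
       dims \<lparr>layers = replicate 4 Lstep @ [Lfin], dims = [3, 1, 1, 1, 1, 1], cls = \<lambda>x. x = [1]\<rparr> ! Suc i"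
    by (auto simp: Lstep_def Lfin_def nth_append)
qed auto

lemma accepts_theC:
  "accepts theC G v \<longleftrightarrow> Pgood (image_mset (col 4 G) (mset_set (verts G)))"
proof -
  let ?y = "foldl (\<lambda>y L. apply_layer L G y) (init_features G) (replicate 4 Lstep)"
  have h: "\<forall>v. kap (?y v) = col (0 + 4) G v"
    by (rule run_rep) simp
  have "image_mset kap (image_mset ?y (mset_set (verts G))) = image_mset (col 4 G) (mset_set (verts G))"
    using h by (simp add: multiset.map_comp comp_def)
  then show ?thesis
    by (simp add: accepts_def theC_def run_layers_def apply_layer_def Lfin_def)
qed

lemma col_iso:
  assumes bij: "bij_betw f (verts G) (verts H)"
    and ed: "\<forall>u\<in>verts G. \<forall>w\<in>verts G. (u, w) \<in> edges G \<longleftrightarrow> (f u, f w) \<in> edges H"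
    and lb: "\<forall>v\<in>verts G. lab H (f v) = lab G v"
    and eG: "edges G \<subseteq> verts G \<times> verts G" and eH: "edges H \<subseteq> verts H \<times> verts H"
  shows "\<forall>v\<in>verts G. col k H (f v) = col k G v"
proof (induction k)
  case 0 then show ?case using lb by (simp add: init_features_def)
next
  case (Suc k)
  show ?case
  proof
    fix v assume v: "v \<in> verts G"
    have nb: "nbrs H (f v) = f ` nbrs G v"
    proof
      show "f ` nbrs G v \<subseteq> nbrs H (f v)"
        using ed eG v by (auto simp: nbrs_def)
      show "nbrs H (f v) \<subseteq> f ` nbrs G v"
      proof
        fix h assume h: "h \<in> nbrs H (f v)"
        then have "h \<in> verts H" using eH by (auto simp: nbrs_def)
        then obtain w where w: "w \<in> verts G" "h = f w" using bij by (metis bij_betw_imp_surj_on imageE)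
        then show "h \<in> f ` nbrs G v" using h ed v by (auto simp: nbrs_def)
      qed
    qed
    have sub: "nbrs G v \<subseteq> verts G" using eG by (auto simp: nbrs_def)
    have inj: "inj_on f (nbrs G v)" using bij sub by (meson bij_betw_def inj_on_subset)
    have "image_mset (col k H) (mset_set (nbrs H (f v))) =
          image_mset (col k H) (image_mset f (mset_set (nbrs G v)))"
      using nb image_mset_mset_set[OF inj] by simp
    also have "\<dots> = image_mset (col k G) (mset_set (nbrs G v))"
      unfolding multiset.map_comp
    proof (rule image_mset_cong)
      fix x assume "x \<in># mset_set (nbrs G v)"
      then have "x \<in> nbrs G v" by (metis elem_mset_set empty_iff infinite_set_mset_mset_set set_mset_empty)
      then show "(col k H \<circ> f) x = col k G x" using Suc sub by auto
    qed
    finally show "col (Suc k) H (f v) = col (Suc k) G v" using Suc v by simp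
  qed
qed

lemma mset_iso:
  assumes bij: "bij_betw f (verts G) (verts H)"
    and c: "\<forall>v\<in>verts G. c' (f v) = c v"
  shows "image_mset c' (mset_set (verts H)) = image_mset c (mset_set (verts G))"
proof -
  have "verts H = f ` verts G" using bij by (simp add: bij_betw_def)
  then have "mset_set (verts H) = image_mset f (mset_set (verts G))"
    using image_mset_mset_set bij by (metis bij_betw_def)
  then have "image_mset c' (mset_set (verts H)) = image_mset (c' \<circ> f) (mset_set (verts G))"
    by (simp add: multiset.map_comp)
  also have "\<dots> = image_mset c (mset_set (verts G))"
  proof (rule image_mset_cong)
    fix x assume "x \<in># mset_set (verts G)"
    then have "x \<in> verts G" by (metis elem_mset_set empty_iff infinite_set_mset_mset_set set_mset_empty)
    then show "(c' \<circ> f) x = c x" using c by auto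
  qed
  finally show ?thesis .
qed

lemma set_image_mset_set: "finite A \<Longrightarrow> set_mset (image_mset f (mset_set A)) = f ` A"
  by simp

lemma col_to_iso:
  assumes fG: "finite (verts G)" and fH: "finite (verts H)"
    and eG: "edges G \<subseteq> verts G \<times> verts G" and eH: "edges H \<subseteq> verts H \<times> verts H"
    and lG: "\<forall>x\<in>verts G. length (lab G x) = 3" and lH: "\<forall>x\<in>verts H. length (lab H x) = 3"
    and injH: "inj_on (col k H) (verts H)"
    and eq: "image_mset (col (Suc k) G) (mset_set (verts G)) = image_mset (col (Suc k) H) (mset_set (verts H))"
  shows "graph_iso G H"
proof -
  let ?c = "col (Suc k) G" and ?d = "col (Suc k) H"
  have injd: "inj_on ?d (verts H)"
    using injH by (auto simp: inj_on_def)
  have imeq: "?c ` verts G = ?d ` verts H"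
    using eq fG fH by (metis set_image_mset_set)
  have "card (?c ` verts G) = card (verts G)"
  proof -
    have "card (?c ` verts G) = card (?d ` verts H)" using imeq by simp
    also have "\<dots> = card (verts H)" using injd card_image by blast
    also have "\<dots> = size (image_mset ?d (mset_set (verts H)))" by simp
    also have "\<dots> = size (image_mset ?c (mset_set (verts G)))" using eq by simp
    also have "\<dots> = card (verts G)" by simp
    finally show ?thesis .
  qed
  then have injc: "inj_on ?c (verts G)" using fG by (simp add: inj_on_iff_eq_card)
  define g where "g = inv_into (verts H) ?d \<circ> ?c"
  have b1: "bij_betw ?c (verts G) (?d ` verts H)" using injc imeq by (simp add: bij_betw_def)
  have b2: "bij_betw (inv_into (verts H) ?d) (?d ` verts H) (verts H)"
    using bij_betw_inv_into[OF inj_on_imp_bij_betw[OF injd]] .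
  have bij: "bij_betw g (verts G) (verts H)" unfolding g_def using bij_betw_trans[OF b1 b2] .
  have gv: "v \<in> verts G \<Longrightarrow> ?d (g v) = ?c v" for v
    unfolding g_def using imeq by (metis comp_apply f_inv_into_f imageI)
  have gvH: "v \<in> verts G \<Longrightarrow> g v \<in> verts H" for v using bij by (meson bij_betwE)
  have gk: "v \<in> verts G \<Longrightarrow> col k H (g v) = col k G v" for v
    using gv[of v] by simp
  have gnb: "v \<in> verts G \<Longrightarrow> col k G ` nbrs G v = col k H ` nbrs H (g v)" for v
  proof -
    assume v: "v \<in> verts G"
    have "image_mset (col k G) (mset_set (nbrs G v)) = image_mset (col k H) (mset_set (nbrs H (g v)))"
      using gv[OF v] by simp
    moreover have "finite (nbrs G v)" using eG fG by (auto simp: nbrs_def intro: finite_subset)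
    moreover have "finite (nbrs H (g v))" using eH fH by (auto simp: nbrs_def intro: finite_subset)
    ultimately show ?thesis by (metis set_image_mset_set)
  qed
  have ed: "\<forall>u\<in>verts G. \<forall>w\<in>verts G. (u, w) \<in> edges G \<longleftrightarrow> (g u, g w) \<in> edges H"
  proof (intro ballI iffI)
    fix u w assume u: "u \<in> verts G" and w: "w \<in> verts G" and e: "(u, w) \<in> edges G"
    then have "col k G w \<in> col k G ` nbrs G u" by (simp add: nbrs_def)
    then have "col k H (g w) \<in> col k H ` nbrs H (g u)" using gnb[OF u] gk[OF w] by simp
    then obtain h where h: "h \<in> nbrs H (g u)" "col k H h = col k H (g w)" by auto
    have "h \<in> verts H" using h eH by (auto simp: nbrs_def)
    then have "h = g w" using injH h gvH[OF w] by (meson inj_onD)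
    then show "(g u, g w) \<in> edges H" using h by (simp add: nbrs_def)
  next
    fix u w assume u: "u \<in> verts G" and w: "w \<in> verts G" and e: "(g u, g w) \<in> edges H"
    then have "col k H (g w) \<in> col k H ` nbrs H (g u)" by (simp add: nbrs_def)
    then have "col k G w \<in> col k G ` nbrs G u" using gnb[OF u] gk[OF w] by simp
    then obtain w' where w': "w' \<in> nbrs G u" "col k G w' = col k G w" by auto
    have w'V: "w' \<in> verts G" using w' eG by (auto simp: nbrs_def)
    have "col k H (g w') = col k H (g w)" using gk w'V w w' by simp
    then have "g w' = g w" using injH gvH w'V w by (meson inj_onD)
    then have "w' = w" using bij w'V w by (metis bij_betw_def inj_onD)
    then show "(u, w) \<in> edges G" using w' by (simp add: nbrs_def)
  qed
  have lb: "\<forall>v\<in>verts G. lab H (g v) = lab G v"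
  proof
    fix v assume v: "v \<in> verts G"
    have "col 0 H (g v) = col 0 G v" using col_down[of "Suc k" 0 H "g v" G v] gv[OF v] by simp
    then show "lab H (g v) = lab G v" using col0_lab lG lH v gvH[OF v] by (metis to_nat_split)
  qed
  show ?thesis unfolding graph_iso_def using bij ed lb by blast
qed

lemma col_le: "j \<le> k \<Longrightarrow> col k G x = col k H y \<Longrightarrow> col j G x = col j H y"
  by (metis col_down le_add_diff_inverse2)

lemma gad_simps[simp]: "lab (gad G) = gad_lab" by (simp add: gad_def)

lemma gad_lab_len[simp]: "length (gad_lab x) = 3"
  by (cases x) auto

lemma col0_gad: "col 0 (gad G) x = to_nat (gad_lab x)"
  using col0_lab[of "gad G" x] by simp

lemma col_gad_lab: "col k (gad G) x = col k (gad G) y \<Longrightarrow> gad_lab x = gad_lab y"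
  using col_le[of 0 k "gad G" x "gad G" y] col0_gad by (metis le0 to_nat_split)

lemma gad_edges_sub: "edges (gad G) \<subseteq> verts (gad G) \<times> verts (gad G)"
  unfolding gad_def by auto

lemma gad_finite: "finite (edges G) \<Longrightarrow> finite (verts (gad G))"
  unfolding gad_def by auto

lemma gad_V1: "V1 x \<in> verts (gad G) \<Longrightarrow> edges G \<subseteq> verts G \<times> verts G \<Longrightarrow> x \<in> verts G"
  unfolding gad_def by auto

lemma gad_V2: "V2 u w \<in> verts (gad G) \<Longrightarrow> (u, w) \<in> edges G"
  unfolding gad_def by auto

lemma gad_V3: "V3 u w \<in> verts (gad G) \<Longrightarrow> (u, w) \<in> edges G"
  unfolding gad_def by auto

lemma nbrs_V1: "nbrs (gad G) (V1 x) = V2 x ` {w. (x, w) \<in> edges G} \<union> (\<lambda>u. V3 u x) ` {u. (u, x) \<in> edges G}"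
  unfolding gad_def nbrs_def by auto

lemma nbrs_V2: "(u, w) \<in> edges G \<Longrightarrow> nbrs (gad G) (V2 u w) = {V1 u, V3 u w}"
  unfolding gad_def nbrs_def by auto

lemma nbrs_V3: "(u, w) \<in> edges G \<Longrightarrow> nbrs (gad G) (V3 u w) = {V2 u w, V1 w}"
  unfolding gad_def nbrs_def by auto

lemma outdeg_inj:
  assumes slo: "strict_linear_order G" and x: "x \<in> verts G" and y: "y \<in> verts G"
    and eq: "card {w. (x, w) \<in> edges G} = card {w. (y, w) \<in> edges G}"
  shows "x = y"
proof (rule ccontr)
  assume ne: "x \<noteq> y"
  from slo obtain d where dg: "dgraph d G" and tr: "\<forall>u w z. (u, w) \<in> edges G \<longrightarrow> (w, z) \<in> edges G \<longrightarrow> (u, z) \<in> edges G"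
    and tot: "\<forall>u\<in>verts G. \<forall>w\<in>verts G. u \<noteq> w \<longrightarrow> (u, w) \<in> edges G \<or> (w, u) \<in> edges G"
    unfolding strict_linear_order_def by blast
  have fin: "\<And>a. finite {w. (a, w) \<in> edges G}"
  proof -
    fix a
    have "{w. (a, w) \<in> edges G} \<subseteq> verts G" using dg unfolding dgraph_def by auto
    then show "finite {w. (a, w) \<in> edges G}" using dg unfolding dgraph_def by (meson finite_subset)
  qed
  have lf: "\<And>a. (a, a) \<notin> edges G" using dg unfolding dgraph_def by auto
  have key: "card {w. (b, w) \<in> edges G} < card {w. (a, w) \<in> edges G}" if ab: "(a, b) \<in> edges G" for a b
  proof (rule psubset_card_mono[OF fin])
    show "{w. (b, w) \<in> edges G} \<subset> {w. (a, w) \<in> edges G}"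
      using ab tr lf by blast
  qed
  from tot x y ne have "(x, y) \<in> edges G \<or> (y, x) \<in> edges G" by blast
  then show False using key eq by force
qed

lemma pair_mset_eq: "{#a, b#} = {#a', b'#} \<Longrightarrow> a \<noteq> b' \<Longrightarrow> a = a' \<and> b = b'"
  by (auto simp: add_eq_conv_ex)

lemma count_lab:
  assumes "finite A"
  shows "size (filter_mset (\<lambda>c. c = a) (image_mset f (mset_set A))) = card {y\<in>A. f y = a}"
proof -
  have "filter_mset (\<lambda>c. c = a) (image_mset f (mset_set A)) = image_mset f (filter_mset (\<lambda>y. f y = a) (mset_set A))"
    by (simp add: image_mset_filter_mset_swap[symmetric])
  then show ?thesis using assms by simp
qed

lemma slo_sub: "strict_linear_order G \<Longrightarrow> edges G \<subseteq> verts G \<times> verts G"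
  unfolding strict_linear_order_def dgraph_def by blast

lemma slo_fin: "strict_linear_order G \<Longrightarrow> finite (edges G)"
  unfolding strict_linear_order_def dgraph_def by (meson finite_SigmaI finite_subset)

lemma claim1:
  assumes slo: "strict_linear_order G" and x: "V1 x \<in> verts (gad G)" and y: "V1 y \<in> verts (gad G)"
    and eq: "col 1 (gad G) (V1 x) = col 1 (gad G) (V1 y)"
  shows "x = y"
proof -
  let ?H = "gad G"
  have fin: "\<And>a. finite (nbrs ?H a)"
    using gad_edges_sub gad_finite[OF slo_fin[OF slo]] unfolding nbrs_def
    by (metis (no_types, lifting) finite_subset mem_Collect_eq mem_Sigma_iff subsetD subsetI)
  have me: "image_mset (col 0 ?H) (mset_set (nbrs ?H (V1 x))) = image_mset (col 0 ?H) (mset_set (nbrs ?H (V1 y)))"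
    using eq by simp
  have cnt: "card {n\<in>nbrs ?H (V1 a). col 0 ?H n = to_nat [False, True, False]} = card {w. (a, w) \<in> edges G}" for a
  proof -
    have "{n\<in>nbrs ?H (V1 a). col 0 ?H n = to_nat [False, True, False]} = V2 a ` {w. (a, w) \<in> edges G}"
      unfolding nbrs_V1 col0_gad by auto
    moreover have "inj (V2 a)" by (simp add: inj_def)
    ultimately show ?thesis by (simp add: card_image inj_on_subset)
  qed
  have "card {w. (x, w) \<in> edges G} = card {w. (y, w) \<in> edges G}"
    using count_lab[OF fin, of "to_nat [False, True, False]" "col 0 ?H"] me cnt by metis
  moreover have "x \<in> verts G" "y \<in> verts G" using gad_V1[OF x slo_sub[OF slo]] gad_V1[OF y slo_sub[OF slo]] by auto
  ultimately show ?thesis using outdeg_inj[OF slo] by metis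
qed

lemma mset_pair: "a \<noteq> b \<Longrightarrow> mset_set {a, b} = {#a, b#}"
  by simp

lemma claim2a:
  assumes slo: "strict_linear_order G" and x: "V2 u w \<in> verts (gad G)" and y: "V2 u' w' \<in> verts (gad G)"
    and eq: "col 2 (gad G) (V2 u w) = col 2 (gad G) (V2 u' w')"
  shows "u = u'"
proof -
  let ?H = "gad G"
  have e1: "(u, w) \<in> edges G" "(u', w') \<in> edges G" using gad_V2[OF x] gad_V2[OF y] by auto
  have "image_mset (col 1 ?H) (mset_set (nbrs ?H (V2 u w))) = image_mset (col 1 ?H) (mset_set (nbrs ?H (V2 u' w')))"
    using eq by (simp add: numeral_2_eq_2)
  then have "{#col 1 ?H (V1 u), col 1 ?H (V3 u w)#} = {#col 1 ?H (V1 u'), col 1 ?H (V3 u' w')#}"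
    using e1 by (simp add: nbrs_V2)
  moreover have "col 1 ?H (V1 u) \<noteq> col 1 ?H (V3 u' w')" using col_gad_lab[of 1 G "V1 u" "V3 u' w'"] by auto
  ultimately have c: "col 1 ?H (V1 u) = col 1 ?H (V1 u')" using pair_mset_eq by metis
  have a: "V1 u \<in> verts ?H" "V1 u' \<in> verts ?H" using e1 unfolding gad_def by auto
  show ?thesis by (rule claim1[OF slo a c])
qed

lemma claim2b:
  assumes slo: "strict_linear_order G" and x: "V3 u w \<in> verts (gad G)" and y: "V3 u' w' \<in> verts (gad G)"
    and eq: "col 2 (gad G) (V3 u w) = col 2 (gad G) (V3 u' w')"
  shows "w = w'"
proof -
  let ?H = "gad G"
  have e1: "(u, w) \<in> edges G" "(u', w') \<in> edges G" using gad_V3[OF x] gad_V3[OF y] by auto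
  have "image_mset (col 1 ?H) (mset_set (nbrs ?H (V3 u w))) = image_mset (col 1 ?H) (mset_set (nbrs ?H (V3 u' w')))"
    using eq by (simp add: numeral_2_eq_2)
  then have "{#col 1 ?H (V1 w), col 1 ?H (V2 u w)#} = {#col 1 ?H (V1 w'), col 1 ?H (V2 u' w')#}"
    using e1 by (simp add: nbrs_V3 add_mset_commute)
  moreover have "col 1 ?H (V1 w) \<noteq> col 1 ?H (V2 u' w')" using col_gad_lab[of 1 G "V1 w" "V2 u' w'"] by auto
  ultimately have c: "col 1 ?H (V1 w) = col 1 ?H (V1 w')" using pair_mset_eq by metis
  have a: "V1 w \<in> verts ?H" "V1 w' \<in> verts ?H" using e1 unfolding gad_def by auto
  show ?thesis by (rule claim1[OF slo a c])
qed

lemma inj_col3: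
  assumes slo: "strict_linear_order G"
  shows "inj_on (col 3 (gad G)) (verts (gad G))"
proof (rule inj_onI)
  let ?H = "gad G"
  fix x y assume x: "x \<in> verts ?H" and y: "y \<in> verts ?H" and eq: "col 3 ?H x = col 3 ?H y"
  have lab: "gad_lab x = gad_lab y" using col_gad_lab[OF eq] .
  have c2: "col 2 ?H x = col 2 ?H y" using col_le[of 2 3] eq by simp
  have c1: "col 1 ?H x = col 1 ?H y" using col_le[of 1 3] eq by simp
  have m3: "image_mset (col 2 ?H) (mset_set (nbrs ?H x)) = image_mset (col 2 ?H) (mset_set (nbrs ?H y))"
    using eq by (simp add: numeral_3_eq_3 numeral_2_eq_2)
  show "x = y"
  proof (cases x)
    case (V1 a)
    then obtain b where yb: "y = V1 b" using lab by (cases y) auto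
    then show ?thesis using claim1[OF slo, of a b] x y c1 V1 by simp
  next
    case (V2 u w)
    then obtain u' w' where yb: "y = V2 u' w'" using lab by (cases y) auto
    have uu: "u = u'" using claim2a[OF slo, of u w u' w'] x y c2 V2 yb by simp
    have e1: "(u, w) \<in> edges G" "(u', w') \<in> edges G" using gad_V2 x y V2 yb by auto
    have "{#col 2 ?H (V3 u w), col 2 ?H (V1 u)#} = {#col 2 ?H (V3 u' w'), col 2 ?H (V1 u')#}"
      using m3 e1 V2 yb by (simp add: nbrs_V2 add_mset_commute)
    moreover have "col 2 ?H (V3 u w) \<noteq> col 2 ?H (V1 u')" using col_gad_lab[of 2 G "V3 u w" "V1 u'"] by auto
    ultimately have c: "col 2 ?H (V3 u w) = col 2 ?H (V3 u' w')" using pair_mset_eq by metis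
    have a: "V3 u w \<in> verts ?H" "V3 u' w' \<in> verts ?H" using e1 unfolding gad_def by auto
    have "w = w'" by (rule claim2b[OF slo a c])
    then show ?thesis using uu V2 yb by simp
  next
    case (V3 u w)
    then obtain u' w' where yb: "y = V3 u' w'" using lab by (cases y) auto
    have ww: "w = w'" using claim2b[OF slo, of u w u' w'] x y c2 V3 yb by simp
    have e1: "(u, w) \<in> edges G" "(u', w') \<in> edges G" using gad_V3 x y V3 yb by auto
    have "{#col 2 ?H (V2 u w), col 2 ?H (V1 w)#} = {#col 2 ?H (V2 u' w'), col 2 ?H (V1 w')#}"
      using m3 e1 V3 yb by (simp add: nbrs_V3)
    moreover have "col 2 ?H (V2 u w) \<noteq> col 2 ?H (V1 w')" using col_gad_lab[of 2 G "V2 u w" "V1 w'"] by auto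
    ultimately have c: "col 2 ?H (V2 u w) = col 2 ?H (V2 u' w')" using pair_mset_eq by metis
    have a: "V2 u w \<in> verts ?H" "V2 u' w' \<in> verts ?H" using e1 unfolding gad_def by auto
    have "u = u'" by (rule claim2a[OF slo a c])
    then show ?thesis using ww V3 yb by simp
  qed
qed

theorem theorem5:
  shows "\<exists>C. wf_classifier 3 C \<and>
    (\<forall>G :: nat graph. ugraph 3 G \<longrightarrow>
       (\<forall>v\<in>verts G. accepts C G v \<longleftrightarrow> phi_GadLin G v))"
proof (intro exI conjI allI impI ballI)
  show "wf_classifier 3 theC" by (rule wf_theC)
  fix G :: "nat graph" and v assume ug: "ugraph 3 G" and v: "v \<in> verts G"
  have fG: "finite (verts G)" and eG: "edges G \<subseteq> verts G \<times> verts G"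
    and lG: "\<forall>x\<in>verts G. length (lab G x) = 3"
    using ug unfolding ugraph_def dgraph_def by auto
  show "accepts theC G v \<longleftrightarrow> phi_GadLin G v"
    unfolding accepts_theC
  proof
    assume "Pgood (image_mset (col 4 G) (mset_set (verts G)))"
    then obtain G' :: "nat graph" where slo: "strict_linear_order G'"
      and eq: "image_mset (col 4 G) (mset_set (verts G)) = image_mset (col 4 (gad G')) (mset_set (verts (gad G')))"
      unfolding Pgood_def by blast
    have "graph_iso G (gad G')"
      apply (rule col_to_iso[where k = 3])
      using fG gad_finite[OF slo_fin[OF slo]] eG gad_edges_sub lG inj_col3[OF slo] eq
      by (auto simp: numeral_eq_Suc)
    then show "phi_GadLin G v" unfolding phi_GadLin_def using slo by blast
  next
    assume "phi_GadLin G v"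
    then obtain G' :: "nat graph" where slo: "strict_linear_order G'" and iso: "graph_iso G (gad G')"
      unfolding phi_GadLin_def by blast
    then obtain f where bij: "bij_betw f (verts G) (verts (gad G'))"
      and ed: "\<forall>u\<in>verts G. \<forall>w\<in>verts G. (u, w) \<in> edges G \<longleftrightarrow> (f u, f w) \<in> edges (gad G')"
      and lb: "\<forall>v\<in>verts G. lab (gad G') (f v) = lab G v"
      unfolding graph_iso_def by blast
    have "\<forall>v\<in>verts G. col 4 (gad G') (f v) = col 4 G v"
      using col_iso[OF bij ed lb eG gad_edges_sub] by blast
    then have "image_mset (col 4 (gad G')) (mset_set (verts (gad G'))) = image_mset (col 4 G) (mset_set (verts G))"
      using mset_iso[OF bij] by blast
    then show "Pgood (image_mset (col 4 G) (mset_set (verts G)))"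
      unfolding Pgood_def using slo by metis
  qed
qed

end
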